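(* There is no linear isometry $\phi:\ell^\infty\to\ell^\infty$ whose image is contained in $L(\mathbb{N}\cup\{\omega\})\cup\{0\}$. That is, the set of bounded real sequences having at most countably many accumulation points, together with $0$, does not contain an isometric copy of $\ell^\infty$.
   Context: $\ell^\infty$ is the Banach space of bounded real sequences with the sup norm. For $x\in\ell^\infty$, $L_x$ denotes the set of accumulation points (subsequential limits) of $x$. $\omega$ denotes the cardinality of $\mathbb{N}$. For a set $A$ of cardinalities, $L(A)=\{x\in\ell^\infty: |L_x|\in A\}$; so $L(\mathbb{N}\cup\{\omega\})$ is the set of $x\in\ell^\infty$ with $L_x$ finite or countably infinite. *)

theory Defs
  imports "HOL-Analysis.Analysis"
begin

definition linf :: "(nat \<Rightarrow> real) set" where
  "linf = {x. bounded (range x)}"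

definition linf_norm :: "(nat \<Rightarrow> real) \<Rightarrow> real" where
  "linf_norm x = (SUP n. \<bar>x n\<bar>)"

definition acc_points :: "(nat \<Rightarrow> real) \<Rightarrow> real set" where
  "acc_points x = {l. \<exists>r. strict_mono r \<and> (x \<circ> r) \<longlonglongrightarrow> l}"

text \<open>L(N \<union> {omega}): bounded sequences with finitely or countably infinitely many accumulation points.\<close>
definition L_countable :: "(nat \<Rightarrow> real) set" where
  "L_countable = {x \<in> linf. countable (acc_points x)}"

definition linf_linear_isometry :: "((nat \<Rightarrow> real) \<Rightarrow> (nat \<Rightarrow> real)) \<Rightarrow> bool" where
  "linf_linear_isometry \<phi> \<longleftrightarrow>
     (\<forall>x\<in>linf. \<phi> x \<in> linf) \<and>
     (\<forall>x\<in>linf. \<forall>y\<in>linf. \<forall>a b::real.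
        \<phi> (\<lambda>n. a * x n + b * y n) = (\<lambda>n. a * \<phi> x n + b * \<phi> y n)) \<and>
     (\<forall>x\<in>linf. \<forall>y\<in>linf. linf_norm (\<lambda>n. \<phi> x n - \<phi> y n) = linf_norm (\<lambda>n. x n - y n))"

end

theory Submission
  imports Defs
begin

lemma linf_iff: "x \<in> linf \<longleftrightarrow> (\<exists>B. \<forall>n. \<bar>x n\<bar> \<le> B)"
  unfolding linf_def bounded_iff by auto

lemma linf_zero: "(\<lambda>n::nat. 0::real) \<in> linf"
  by (auto simp: linf_iff intro: exI[of _ 0])

lemma linf_norm_upper: "x \<in> linf \<Longrightarrow> \<bar>x n\<bar> \<le> linf_norm x"
  unfolding linf_norm_def linf_iff
  by (rule cSUP_upper) (auto simp: bdd_above_def)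

lemma linf_norm_least: "(\<And>n. \<bar>x n\<bar> \<le> B) \<Longrightarrow> linf_norm x \<le> B"
  unfolding linf_norm_def by (rule cSUP_least) auto

lemma linf_lin: "x \<in> linf \<Longrightarrow> y \<in> linf \<Longrightarrow> (\<lambda>n. a * x n + b * y n) \<in> linf"
proof -
  assume "x \<in> linf" "y \<in> linf"
  then obtain A B where A: "\<And>n. \<bar>x n\<bar> \<le> A" and B: "\<And>n. \<bar>y n\<bar> \<le> B" unfolding linf_iff by blast
  have "\<bar>a * x n + b * y n\<bar> \<le> \<bar>a\<bar> * A + \<bar>b\<bar> * B" for n
  proof -
    have "\<bar>a * x n + b * y n\<bar> \<le> \<bar>a\<bar> * \<bar>x n\<bar> + \<bar>b\<bar> * \<bar>y n\<bar>" by (simp add: abs_mult[symmetric] abs_triangle_ineq)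
    also have "\<dots> \<le> \<bar>a\<bar> * A + \<bar>b\<bar> * B" using A B by (intro add_mono mult_left_mono) auto
    finally show ?thesis .
  qed
  then show ?thesis unfolding linf_iff by blast
qed

lemma linf_sum:
  fixes K :: nat and u :: "nat \<Rightarrow> nat \<Rightarrow> real"
  assumes "\<And>k. u k \<in> linf"
  shows "(\<lambda>m. \<Sum>k<K. c k * u k m) \<in> linf"
proof (induction K)
  case 0 then show ?case using linf_zero by simp
next
  case (Suc K)
  have "(\<lambda>m. \<Sum>k<Suc K. c k * u k m) = (\<lambda>m. 1 * (\<Sum>k<K. c k * u k m) + c K * u K m)" by simp
  then show ?case using Suc assms linf_lin by metis
qed

lemma phi_lin:
  assumes "linf_linear_isometry \<phi>" "x \<in> linf" "y \<in> linf"
  shows "\<phi> (\<lambda>n. a * x n + b * y n) = (\<lambda>n. a * \<phi> x n + b * \<phi> y n)"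
  using assms unfolding linf_linear_isometry_def by blast

lemma phi_iso:
  assumes "linf_linear_isometry \<phi>" "x \<in> linf" "y \<in> linf"
  shows "linf_norm (\<lambda>n. \<phi> x n - \<phi> y n) = linf_norm (\<lambda>n. x n - y n)"
  using assms unfolding linf_linear_isometry_def by blast

lemma phi_in:
  assumes "linf_linear_isometry \<phi>" "x \<in> linf"
  shows "\<phi> x \<in> linf"
  using assms unfolding linf_linear_isometry_def by blast

lemma phi_zero: assumes a: "linf_linear_isometry \<phi>" shows "\<phi> (\<lambda>n. 0) = (\<lambda>n. 0)"
proof -
  have "\<phi> (\<lambda>n. 0 * (\<lambda>n. 0::real) n + 0 * (\<lambda>n. 0::real) n) = (\<lambda>n. 0 * \<phi> (\<lambda>n. 0) n + 0 * \<phi> (\<lambda>n. 0) n)"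
    by (rule phi_lin[OF a linf_zero linf_zero])
  then show ?thesis by simp
qed

lemma phi_sum:
  fixes K :: nat and u :: "nat \<Rightarrow> nat \<Rightarrow> real"
  assumes a: "linf_linear_isometry \<phi>" and u: "\<And>k. u k \<in> linf"
  shows "\<phi> (\<lambda>m. \<Sum>k<K. c k * u k m) = (\<lambda>m. \<Sum>k<K. c k * \<phi> (u k) m)"
proof (induction K)
  case 0 then show ?case using phi_zero[OF a] by simp
next
  case (Suc K)
  have e: "(\<lambda>m. \<Sum>k<Suc K. c k * u k m) = (\<lambda>m. 1 * (\<lambda>m. \<Sum>k<K. c k * u k m) m + c K * u K m)" by simp
  have "\<phi> (\<lambda>m. 1 * (\<lambda>m. \<Sum>k<K. c k * u k m) m + c K * u K m) = (\<lambda>m. 1 * \<phi> (\<lambda>m. \<Sum>k<K. c k * u k m) m + c K * \<phi> (u K) m)"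
    by (rule phi_lin[OF a linf_sum[OF u] u])
  then show ?case using Suc by (simp add: e)
qed

lemma phi_norm: assumes a: "linf_linear_isometry \<phi>" "x \<in> linf" shows "linf_norm (\<phi> x) = linf_norm x"
proof -
  have "linf_norm (\<lambda>n. \<phi> x n - \<phi> (\<lambda>n. 0) n) = linf_norm (\<lambda>n. x n - 0)"
    by (rule phi_iso[OF a linf_zero])
  then show ?thesis using phi_zero[OF a(1)] by simp
qed

lemma uncountable_nat_bool: "uncountable (UNIV :: (nat \<Rightarrow> bool) set)"
proof
  assume c: "countable (UNIV :: (nat \<Rightarrow> bool) set)"
  define f where "f = from_nat_into (UNIV :: (nat \<Rightarrow> bool) set)"
  have "range f = UNIV" unfolding f_def using c by simp
  then obtain n where "f n = (\<lambda>k. \<not> f k k)" by (metis UNIV_I imageE)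
  then have "f n n = (\<not> f n n)" by (rule fun_cong)
  then show False by simp
qed

lemma attained_or_acc:
  assumes y: "y \<in> linf"
  shows "(\<exists>n. \<bar>y n\<bar> = linf_norm y) \<or> (\<exists>l r. strict_mono r \<and> (y \<circ> r) \<longlonglongrightarrow> l \<and> \<bar>l\<bar> = linf_norm y)"
proof (cases "\<exists>n. \<bar>y n\<bar> = linf_norm y")
  case True then show ?thesis by blast
next
  case False
  define W where "W = linf_norm y"
  from False have lt: "\<bar>y n\<bar> < W" for n using linf_norm_upper[OF y, of n] unfolding W_def by (metis order_le_less)
  define A where "A j = {n. W - 1 / real (Suc j) < \<bar>y n\<bar>}" for j
  have inf: "infinite (A j)" for j
  proof
    assume fin: "finite (A j)"
    define B where "B = Max (insert (W - 1 / real (Suc j)) ((\<lambda>n. \<bar>y n\<bar>) ` A j))"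
    have "B < W" unfolding B_def using fin lt by (subst Max_less_iff) auto
    moreover have "\<bar>y n\<bar> \<le> B" for n
    proof (cases "n \<in> A j")
      case True then show ?thesis unfolding B_def using fin by (intro Max_ge) auto
    next
      case False
      then have "\<bar>y n\<bar> \<le> W - 1 / real (Suc j)" unfolding A_def by auto
      also have "\<dots> \<le> B" unfolding B_def using fin by (intro Max_ge) auto
      finally show ?thesis .
    qed
    then have "W \<le> B" unfolding W_def by (rule linf_norm_least)
    ultimately show False by simp
  qed
  have "\<exists>r. \<forall>j. r j \<in> A j \<and> r j < r (Suc j)"
  proof (rule dependent_nat_choice)
    show "\<exists>x. x \<in> A 0" using inf[of 0] by (metis finite.emptyI ex_in_conv)
    fix x j
    show "\<exists>y. y \<in> A (Suc j) \<and> x < y" using inf[of "Suc j"] unfolding infinite_nat_iff_unbounded by blast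
  qed
  then obtain r where r: "\<And>j. r j \<in> A j" "\<And>j. r j < r (Suc j)" by blast
  have sm: "strict_mono r" using r(2) by (simp add: strict_mono_Suc_iff)
  have lim1: "(\<lambda>j. \<bar>y (r j)\<bar>) \<longlonglongrightarrow> W"
  proof (rule real_tendsto_sandwich[of "\<lambda>j. W - 1 / real (Suc j)" _ _ "\<lambda>j. W"])
    show "\<forall>\<^sub>F j in sequentially. W - 1 / real (Suc j) \<le> \<bar>y (r j)\<bar>" using r(1) unfolding A_def by (intro always_eventually allI less_imp_le) auto
    show "\<forall>\<^sub>F j in sequentially. \<bar>y (r j)\<bar> \<le> W" using lt by (intro always_eventually allI less_imp_le) auto
    show "(\<lambda>j. W - 1 / real (Suc j)) \<longlonglongrightarrow> W"
      using tendsto_diff[OF tendsto_const[of W] LIMSEQ_inverse_real_of_nat] by (simp add: inverse_eq_divide)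
    show "(\<lambda>j. W) \<longlonglongrightarrow> W" by simp
  qed
  have "bounded (range (y \<circ> r))" using y unfolding linf_def bounded_iff by auto
  then obtain l r' where r': "strict_mono r'" "((y \<circ> r) \<circ> r') \<longlonglongrightarrow> l"
    using bounded_imp_convergent_subsequence by blast
  have "((\<lambda>j. \<bar>y (r j)\<bar>) \<circ> r') \<longlonglongrightarrow> W" by (rule LIMSEQ_subseq_LIMSEQ[OF lim1 r'(1)])
  moreover have "((\<lambda>j. \<bar>y (r j)\<bar>) \<circ> r') \<longlonglongrightarrow> \<bar>l\<bar>" using tendsto_rabs[OF r'(2)] by (simp add: o_def)
  ultimately have "\<bar>l\<bar> = W" using LIMSEQ_unique by blast
  have "strict_mono (r \<circ> r')" using sm r'(1) by (rule strict_mono_o)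
  have "\<exists>l r. strict_mono r \<and> (y \<circ> r) \<longlonglongrightarrow> l \<and> \<bar>l\<bar> = linf_norm y"
  proof (intro exI conjI)
    show "(y \<circ> (r \<circ> r')) \<longlonglongrightarrow> l" using r'(2) by (simp add: comp_assoc)
  qed (use \<open>\<bar>l\<bar> = W\<close> \<open>strict_mono (r \<circ> r')\<close> W_def in auto)
  then show ?thesis by blast
qed

definition al :: "nat \<Rightarrow> real" where "al k = (1/3) ^ Suc k"
definition eps :: "(nat \<Rightarrow> bool) \<Rightarrow> nat \<Rightarrow> real" where "eps b k = (if b k then 1 else -1)"
definition len :: "nat \<Rightarrow> nat" where "len m = length (from_nat m :: bool list)"
definition uu :: "nat \<Rightarrow> nat \<Rightarrow> real" where
  "uu k m = (if k < len m then (if (from_nat m :: bool list) ! k then 1 else -1) else 0)"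
definition XX :: "(nat \<Rightarrow> bool) \<Rightarrow> nat \<Rightarrow> real" where
  "XX b = (\<lambda>m. \<Sum>k<len m. al k * eps b k * uu k m)"

lemma al_pos: "0 < al k" by (simp add: al_def)
lemma abs_eps: "\<bar>eps b k\<bar> = 1" by (simp add: eps_def)
lemma eps_sq: "eps b k * eps b k = 1" by (simp add: eps_def)
lemma abs_uu: "\<bar>uu k m\<bar> \<le> 1" by (simp add: uu_def)
lemma uu_linf: "uu k \<in> linf" unfolding linf_iff using abs_uu by blast
lemma uu_zero: "len m \<le> k \<Longrightarrow> uu k m = 0" by (simp add: uu_def)

lemma geo: "K \<le> N \<Longrightarrow> (\<Sum>k\<in>{K..<N}. al k) = ((1/3)^K - (1/3)^N) / 2"
proof (induction N)
  case 0 then show ?case by simp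
next
  case (Suc N)
  show ?case
  proof (cases "K = Suc N")
    case True then show ?thesis by simp
  next
    case False
    then have KN: "K \<le> N" using Suc.prems by simp
    have "(\<Sum>k\<in>{K..<Suc N}. al k) = (\<Sum>k\<in>{K..<N}. al k) + al N" using KN by simp
    also have "\<dots> = ((1/3)^K - (1/3)^N) / 2 + (1/3)^N / 3" using Suc.IH[OF KN] by (simp add: al_def)
    also have "\<dots> = ((1/3)^K - (1/3)^Suc N) / 2" by (simp add: field_simps)
    finally show ?thesis .
  qed
qed

lemma geo0: "(\<Sum>k<K. al k) = (1 - (1/3)^K) / 2"
  using geo[of 0 K] by (simp add: atLeast0LessThan)

lemma XX_ext: "len m \<le> N \<Longrightarrow> XX b m = (\<Sum>k<N. al k * eps b k * uu k m)"
  unfolding XX_def by (rule sum.mono_neutral_left) (auto simp: uu_zero)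

lemma XX_approx: "\<bar>XX b m - (\<Sum>k<K. al k * eps b k * uu k m)\<bar> \<le> (1/3)^K / 2"
proof -
  define N where "N = max K (len m)"
  have "XX b m - (\<Sum>k<K. al k * eps b k * uu k m) = (\<Sum>k\<in>{K..<N}. al k * eps b k * uu k m)"
    using XX_ext[of m N b] sum_diff_nat_ivl[of 0 K N "\<lambda>k. al k * eps b k * uu k m"]
    unfolding N_def by (simp add: atLeast0LessThan)
  also have "\<bar>\<dots>\<bar> \<le> (\<Sum>k\<in>{K..<N}. \<bar>al k * eps b k * uu k m\<bar>)" by (rule sum_abs)
  also have "\<dots> \<le> (\<Sum>k\<in>{K..<N}. al k)"
  proof (rule sum_mono)
    fix k show "\<bar>al k * eps b k * uu k m\<bar> \<le> al k"
      using abs_uu[of k m] al_pos[of k] by (simp add: abs_mult abs_eps mult_le_cancel_left1)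
  qed
  also have "\<dots> = ((1/3)^K - (1/3)^N) / 2" by (rule geo) (simp add: N_def)
  also have "\<dots> \<le> (1/3)^K / 2" by simp
  finally show ?thesis .
qed

lemma XX_bound: "\<bar>XX b m\<bar> \<le> 1/2"
proof -
  have "\<bar>XX b m\<bar> \<le> (\<Sum>k<len m. \<bar>al k * eps b k * uu k m\<bar>)" unfolding XX_def by (rule sum_abs)
  also have "\<dots> \<le> (\<Sum>k<len m. al k)"
  proof (rule sum_mono)
    fix k show "\<bar>al k * eps b k * uu k m\<bar> \<le> al k"
      using abs_uu[of k m] al_pos[of k] by (simp add: abs_mult abs_eps mult_le_cancel_left1)
  qed
  also have "\<dots> \<le> 1/2" by (simp add: geo0)
  finally show ?thesis .
qed

lemma XX_linf: "XX b \<in> linf" unfolding linf_iff using XX_bound by blast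

lemma XX_norm: "linf_norm (XX b) = 1/2"
proof (rule antisym)
  show "linf_norm (XX b) \<le> 1/2" by (rule linf_norm_least[OF XX_bound])
  have low: "(1 - (1/3)^K) / 2 \<le> linf_norm (XX b)" for K
  proof -
    define m where "m = to_nat (map b [0..<K])"
    have fm: "(from_nat m :: bool list) = map b [0..<K]" unfolding m_def by simp
    have lm: "len m = K" unfolding len_def fm by simp
    have "XX b m = (\<Sum>k<K. al k)" unfolding XX_def lm
      by (rule sum.cong) (auto simp: uu_def lm fm eps_def)
    then have "XX b m = (1 - (1/3)^K) / 2" by (simp add: geo0)
    moreover have "XX b m \<le> linf_norm (XX b)" using linf_norm_upper[OF XX_linf, of b m] by simp
    ultimately show ?thesis by simp
  qed
  show "1/2 \<le> linf_norm (XX b)"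
  proof (rule ccontr)
    assume "\<not> 1/2 \<le> linf_norm (XX b)"
    then have "0 < 1 - 2 * linf_norm (XX b)" by simp
    then obtain K where "(1/3::real)^K < 1 - 2 * linf_norm (XX b)" using real_arch_pow_inv[of "1 - 2 * linf_norm (XX b)" "1/3::real"] by auto
    with low[of K] show False by simp
  qed
qed

lemma linf_diff: "x \<in> linf \<Longrightarrow> y \<in> linf \<Longrightarrow> (\<lambda>n. x n - y n) \<in> linf"
  using linf_lin[of x y 1 "-1"] by simp

lemma v_bd: assumes iso: "linf_linear_isometry \<phi>" shows "\<bar>\<phi> (uu k) m\<bar> \<le> 1"
proof -
  have "\<bar>\<phi> (uu k) m\<bar> \<le> linf_norm (\<phi> (uu k))" by (rule linf_norm_upper[OF phi_in[OF iso uu_linf]])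
  also have "\<dots> = linf_norm (uu k)" by (rule phi_norm[OF iso uu_linf])
  also have "\<dots> \<le> 1" by (rule linf_norm_least[OF abs_uu])
  finally show ?thesis .
qed

lemma w_approx: assumes iso: "linf_linear_isometry \<phi>"
  shows "\<bar>\<phi> (XX b) m - (\<Sum>k<K. al k * eps b k * \<phi> (uu k) m)\<bar> \<le> (1/3)^K / 2"
proof -
  define P where "P = (\<lambda>m. \<Sum>k<K. al k * eps b k * uu k m)"
  have Pin: "P \<in> linf" unfolding P_def by (rule linf_sum[OF uu_linf])
  have phiP: "\<phi> P = (\<lambda>m. \<Sum>k<K. al k * eps b k * \<phi> (uu k) m)"
    unfolding P_def using phi_sum[OF iso uu_linf, where c="\<lambda>k. al k * eps b k" and K=K] by simp
  have "\<bar>\<phi> (XX b) m - \<phi> P m\<bar> \<le> linf_norm (\<lambda>n. \<phi> (XX b) n - \<phi> P n)"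
    by (rule linf_norm_upper[OF linf_diff[OF phi_in[OF iso XX_linf] phi_in[OF iso Pin]]])
  also have "\<dots> = linf_norm (\<lambda>n. XX b n - P n)" by (rule phi_iso[OF iso XX_linf Pin])
  also have "\<dots> \<le> (1/3)^K / 2" unfolding P_def by (rule linf_norm_least[OF XX_approx])
  finally show ?thesis unfolding phiP .
qed

lemma key: assumes iso: "linf_linear_isometry \<phi>" and s: "s \<in> {1, -1::real}"
  shows "s * \<phi> (XX b) m \<le> 1/2 - al k * (1 - s * eps b k * \<phi> (uu k) m)"
proof -
  let ?v = "\<lambda>j. \<phi> (uu j) m"
  let ?P = "\<Sum>j<Suc k. al j * eps b j * ?v j"
  have as: "\<bar>s\<bar> = 1" using s by auto
  have a1: "s * eps b j * ?v j \<le> 1" for j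
  proof -
    have "\<bar>s * eps b j * ?v j\<bar> \<le> 1" using v_bd[OF iso, of j m] as by (simp add: abs_mult abs_eps)
    then show ?thesis by simp
  qed
  have "s * \<phi> (XX b) m - s * ?P \<le> \<bar>\<phi> (XX b) m - ?P\<bar>"
  proof -
    have "s * \<phi> (XX b) m - s * ?P = s * (\<phi> (XX b) m - ?P)" by (simp add: algebra_simps)
    also have "\<dots> \<le> \<bar>s * (\<phi> (XX b) m - ?P)\<bar>" by simp
    also have "\<dots> = \<bar>\<phi> (XX b) m - ?P\<bar>" using as by (simp add: abs_mult)
    finally show ?thesis .
  qed
  also have "\<dots> \<le> (1/3)^Suc k / 2" by (rule w_approx[OF iso])
  finally have 1: "s * \<phi> (XX b) m \<le> s * ?P + (1/3)^Suc k / 2" by simp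
  have "s * ?P = (\<Sum>j<k. al j * (s * eps b j * ?v j)) + al k * (s * eps b k * ?v k)"
    by (simp add: sum_distrib_left algebra_simps)
  also have "(\<Sum>j<k. al j * (s * eps b j * ?v j)) \<le> (\<Sum>j<k. al j)"
    by (rule sum_mono) (use a1 al_pos in \<open>simp add: mult_le_cancel_left1 mult.assoc\<close>)
  also have "(\<Sum>j<k. al j) = (1 - (1/3)^k) / 2" by (rule geo0)
  finally have 2: "s * ?P \<le> (1 - (1/3)^k) / 2 + al k * (s * eps b k * ?v k)" by simp
  have "(1 - (1/3::real)^k) / 2 + al k * (s * eps b k * ?v k) + (1/3)^Suc k / 2 = 1/2 - al k * (1 - s * eps b k * ?v k)"
    by (simp add: al_def field_simps)
  with 1 2 show ?thesis by linarith
qed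

definition QQ :: "real \<Rightarrow> real \<Rightarrow> (nat \<Rightarrow> bool) \<Rightarrow> bool" where
  "QQ l s b \<longleftrightarrow> (\<forall>K. \<bar>l - (\<Sum>k<K. al k * (s * eps b k))\<bar> \<le> (1/3)^K / 2)"

lemma QQ_unique:
  assumes s: "s \<in> {1, -1::real}" and q1: "QQ l s b" and q2: "QQ l s b'"
  shows "b = b'"
proof (rule ext)
  fix k show "b k = b' k"
  proof (induction k rule: less_induct)
    case (less k)
    have as: "\<bar>s\<bar> = 1" using s by auto
    have "\<bar>l - (\<Sum>j<Suc k. al j * (s * eps b j))\<bar> \<le> (1/3)^Suc k / 2" using q1 unfolding QQ_def by blast
    moreover have "\<bar>l - (\<Sum>j<Suc k. al j * (s * eps b' j))\<bar> \<le> (1/3)^Suc k / 2" using q2 unfolding QQ_def by blast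
    ultimately have d: "\<bar>(\<Sum>j<Suc k. al j * (s * eps b j)) - (\<Sum>j<Suc k. al j * (s * eps b' j))\<bar> \<le> al k"
      unfolding al_def by linarith
    have "(\<Sum>j<Suc k. al j * (s * eps b j)) - (\<Sum>j<Suc k. al j * (s * eps b' j))
       = (\<Sum>j<k. al j * (s * eps b j) - al j * (s * eps b' j)) + (al k * (s * eps b k) - al k * (s * eps b' k))"
      by (simp add: sum_subtractf)
    also have "(\<Sum>j<k. al j * (s * eps b j) - al j * (s * eps b' j)) = 0"
      using less.IH by (intro sum.neutral) (simp add: eps_def)
    finally have "\<bar>al k * s * (eps b k - eps b' k)\<bar> \<le> al k" using d by (simp add: algebra_simps)
    then have "al k * \<bar>eps b k - eps b' k\<bar> \<le> al k * 1" using as al_pos[of k] by (simp add: abs_mult)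
    then have "\<bar>eps b k - eps b' k\<bar> \<le> 1" using al_pos[of k] by (simp add: mult_le_cancel_left_pos)
    then show ?case by (auto simp: eps_def split: if_splits)
  qed
qed

lemma QQ_countable: assumes s: "s \<in> {1, -1::real}" shows "countable {b. QQ l s b}"
proof (cases "\<exists>b0. QQ l s b0")
  case True
  then obtain b0 where "QQ l s b0" by blast
  then have "{b. QQ l s b} \<subseteq> {b0}" using QQ_unique[OF s] by blast
  then show ?thesis by (rule countable_subset) simp
next
  case False then show ?thesis by simp
qed

lemma acc_zero: "acc_points (\<lambda>n. 0) \<subseteq> {0}"
proof
  fix l assume "l \<in> acc_points (\<lambda>n. 0)"
  then obtain r where "((\<lambda>n::nat. 0::real) \<circ> r) \<longlonglongrightarrow> l" unfolding acc_points_def by blast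
  then have "(\<lambda>n::nat. 0::real) \<longlonglongrightarrow> l" by (simp add: o_def)
  then show "l \<in> {0}" using LIMSEQ_unique[OF _ tendsto_const] by blast
qed

theorem proposition3p1:
  shows "\<not> (\<exists>\<phi>. linf_linear_isometry \<phi> \<and> \<phi> ` linf \<subseteq> L_countable \<union> {(\<lambda>n. 0)})"
proof
  assume "\<exists>\<phi>. linf_linear_isometry \<phi> \<and> \<phi> ` linf \<subseteq> L_countable \<union> {(\<lambda>n. 0)}"
  then obtain \<phi> where iso: "linf_linear_isometry \<phi>" and img: "\<phi> ` linf \<subseteq> L_countable \<union> {(\<lambda>n. 0)}" by blast
  define v where "v k = \<phi> (uu k)" for k
  define w where "w b = \<phi> (XX b)" for b
  define z where "z = w (\<lambda>_. True)"
  have w_in: "w b \<in> linf" for b unfolding w_def by (rule phi_in[OF iso XX_linf])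
  have w_norm: "linf_norm (w b) = 1/2" for b unfolding w_def using phi_norm[OF iso XX_linf] XX_norm by simp
  have vb: "\<bar>v k m\<bar> \<le> 1" for k m unfolding v_def by (rule v_bd[OF iso])
  have keyw: "s * w b m \<le> 1/2 - al k * (1 - s * eps b k * v k m)" if "s \<in> {1, -1}" for s b m k
    unfolding w_def v_def by (rule key[OF iso that])
  have approxz: "\<bar>z m - (\<Sum>k<K. al k * v k m)\<bar> \<le> (1/3)^K / 2" for m K
    using w_approx[OF iso, of "\<lambda>_. True" m K] unfolding z_def w_def v_def by (simp add: eps_def)
  have cz: "countable (acc_points z)"
  proof -
    have "z \<in> L_countable \<union> {(\<lambda>n. 0)}" using img XX_linf unfolding z_def w_def by blast
    then show ?thesis
    proof
      assume "z \<in> L_countable" then show ?thesis unfolding L_countable_def by blast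
    next
      assume "z \<in> {\<lambda>n. 0}" then show ?thesis using acc_zero countable_subset by fastforce
    qed
  qed
  define Ec where "Ec = {b. \<exists>n. \<bar>w b n\<bar> = 1/2}"
  have cEc: "countable Ec"
  proof -
    have "Ec \<subseteq> (\<lambda>(n, s). (\<lambda>k. 0 < s * v k n)) ` (UNIV \<times> {1, -1})"
    proof
      fix b assume "b \<in> Ec"
      then obtain n where n: "\<bar>w b n\<bar> = 1/2" unfolding Ec_def by blast
      define s where "s = 2 * w b n"
      have s: "s \<in> {1, -1}" using n unfolding s_def by (auto simp: abs_if split: if_splits)
      have "w b n = 1/2 \<or> w b n = -1/2" using n by (auto simp: abs_if split: if_splits)
      have "s * w b n = 2 * \<bar>w b n\<bar>^2" unfolding s_def by (simp add: power2_eq_square)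
      then have sw: "s * w b n = 1/2" using n by (simp add: power2_eq_square)
      have "b = (\<lambda>k. 0 < s * v k n)"
      proof
        fix k
        have "al k * (1 - s * eps b k * v k n) \<le> 0" using keyw[OF s, of b n k] sw by simp
        then have "1 - s * eps b k * v k n \<le> 0" using al_pos[of k] by (simp add: mult_le_0_iff)
        moreover have "\<bar>s * eps b k * v k n\<bar> \<le> 1" using vb[of k n] s by (auto simp: abs_mult abs_eps)
        ultimately have "s * eps b k * v k n = 1" by (simp add: abs_le_iff)
        then show "b k = (0 < s * v k n)" using s by (auto simp: eps_def split: if_splits)
      qed
      then show "b \<in> (\<lambda>(n, s). (\<lambda>k. 0 < s * v k n)) ` (UNIV \<times> {1, -1})" using s by force
    qed
    then show ?thesis by (rule countable_subset) simp
  qed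
  have cover: "UNIV \<subseteq> Ec \<union> (\<Union>l\<in>acc_points z. \<Union>s\<in>{1, -1::real}. {b. QQ l s b})"
  proof
    fix b :: "nat \<Rightarrow> bool"
    assume "b \<in> UNIV"
    show "b \<in> Ec \<union> (\<Union>l\<in>acc_points z. \<Union>s\<in>{1, -1::real}. {b. QQ l s b})"
    proof (cases "b \<in> Ec")
      case True then show ?thesis by blast
    next
      case False
      then obtain l0 r where r: "strict_mono r" "(w b \<circ> r) \<longlonglongrightarrow> l0" "\<bar>l0\<bar> = 1/2"
        using attained_or_acc[OF w_in[of b]] unfolding Ec_def w_norm by blast
      define s where "s = 2 * l0"
      have s: "s \<in> {1, -1}" using r(3) unfolding s_def by (auto simp: abs_if split: if_splits)
      have "l0 = 1/2 \<or> l0 = -1/2" using r(3) by (auto simp: abs_if split: if_splits)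
      have "s * l0 = 2 * \<bar>l0\<bar>^2" unfolding s_def by (simp add: power2_eq_square)
      then have sl: "s * l0 = 1/2" using r(3) by (simp add: power2_eq_square)
      have vlim: "(\<lambda>j. v k (r j)) \<longlonglongrightarrow> s * eps b k" for k
      proof -
        define a where "a j = s * eps b k * v k (r j)" for j
        have lim0: "(\<lambda>j. (1/2 - s * w b (r j)) / al k) \<longlonglongrightarrow> 0"
        proof -
          have "(\<lambda>j. (1/2 - s * w b (r j)) / al k) \<longlonglongrightarrow> (1/2 - s * l0) / al k"
            using r(2) by (intro tendsto_intros) (auto simp: o_def al_pos[THEN less_imp_neq, symmetric])
          then show ?thesis using sl by simp
        qed
        have "(\<lambda>j. 1 - a j) \<longlonglongrightarrow> 0"
        proof (rule real_tendsto_sandwich[of "\<lambda>j. 0" _ _ "\<lambda>j. (1/2 - s * w b (r j)) / al k"])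
          show "\<forall>\<^sub>F j in sequentially. 0 \<le> 1 - a j"
          proof (intro always_eventually allI)
            fix j have "\<bar>a j\<bar> \<le> 1" unfolding a_def using vb[of k "r j"] s by (auto simp: abs_mult abs_eps)
            then show "0 \<le> 1 - a j" by simp
          qed
          show "\<forall>\<^sub>F j in sequentially. 1 - a j \<le> (1/2 - s * w b (r j)) / al k"
          proof (intro always_eventually allI)
            fix j
            have "al k * (1 - a j) \<le> 1/2 - s * w b (r j)" using keyw[OF s, of b "r j" k] unfolding a_def by simp
            then show "1 - a j \<le> (1/2 - s * w b (r j)) / al k" using al_pos[of k] by (simp add: field_simps)
          qed
        qed (use lim0 in auto)
        then have "(\<lambda>j. 1 - (1 - a j)) \<longlonglongrightarrow> 1 - 0" by (intro tendsto_intros)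
        then have "a \<longlonglongrightarrow> 1" by simp
        then have "(\<lambda>j. (s * eps b k) * a j) \<longlonglongrightarrow> (s * eps b k) * 1" by (intro tendsto_intros)
        moreover have "(s * eps b k) * a j = v k (r j)" for j
          unfolding a_def using s by (auto simp: eps_def)
        ultimately show ?thesis by simp
      qed
      have "bounded (range (z \<circ> r))" using w_in[of "\<lambda>_. True"] unfolding z_def linf_def bounded_iff by auto
      then obtain l r' where r': "strict_mono r'" "((z \<circ> r) \<circ> r') \<longlonglongrightarrow> l"
        using bounded_imp_convergent_subsequence by blast
      have lacc: "l \<in> acc_points z" unfolding acc_points_def
        using strict_mono_o[OF r(1) r'(1)] r'(2) by (auto simp: comp_assoc)
      have "QQ l s b" unfolding QQ_def
      proof
        fix K
        have g: "(\<lambda>j. \<Sum>k<K. al k * v k (r (r' j))) \<longlonglongrightarrow> (\<Sum>k<K. al k * (s * eps b k))"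
        proof (intro tendsto_intros)
          fix k show "(\<lambda>j. v k (r (r' j))) \<longlonglongrightarrow> s * eps b k"
            using LIMSEQ_subseq_LIMSEQ[OF vlim[of k] r'(1)] by (simp add: o_def)
        qed
        have "(\<lambda>j. \<bar>z (r (r' j)) - (\<Sum>k<K. al k * v k (r (r' j)))\<bar>) \<longlonglongrightarrow> \<bar>l - (\<Sum>k<K. al k * (s * eps b k))\<bar>"
        proof -
          have "(\<lambda>j. z (r (r' j))) \<longlonglongrightarrow> l" using r'(2) by (simp add: o_def)
          from tendsto_rabs[OF tendsto_diff[OF this g]] show ?thesis .
        qed
        then show "\<bar>l - (\<Sum>k<K. al k * (s * eps b k))\<bar> \<le> (1/3)^K / 2"
          by (rule LIMSEQ_le_const2) (use approxz in blast)
      qed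
      then show ?thesis using lacc s by blast
    qed
  qed
  have "countable (Ec \<union> (\<Union>l\<in>acc_points z. \<Union>s\<in>{1, -1::real}. {b. QQ l s b}))"
    using cEc cz QQ_countable by (intro countable_Un countable_UN) auto
  then have "countable (UNIV :: (nat \<Rightarrow> bool) set)" using cover countable_subset by blast
  then show False using uncountable_nat_bool by blast
qed

end
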